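(* For positive integers $n$ and $k$, let $w_{n,k}(321)$ be the number of words $w_1\cdots w_n$ with all $w_i\in[k]$ for which there are no indices $i_1<i_2<i_3$ with $w_{i_1}>w_{i_2}>w_{i_3}$. Then \[w_{n,k}(321)=\sum_{a=0}^{\lfloor n/2\rfloor}\frac{n!\,(k+n-a-1)_{n-a}\,(k+a-2)_a}{\big(a!\,(n-2a)!\,(n-a+1)_a\big)^2}.\]
   Context: $[k]=\{1,\dots,k\}$. $(x)_m$ denotes the falling factorial $x(x-1)\cdots(x-m+1)$, with $(x)_0=1$. *)

theory Defs
  imports Complex_Main
begin

definition falling_fact :: "real \<Rightarrow> nat \<Rightarrow> real" where
  "falling_fact x m = (\<Prod>i<m. x - real i)"

definition avoids321 :: "nat list \<Rightarrow> bool" where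
  "avoids321 w \<longleftrightarrow> \<not> (\<exists>i1 i2 i3. i1 < i2 \<and> i2 < i3 \<and> i3 < length w \<and>
       w ! i1 > w ! i2 \<and> w ! i2 > w ! i3)"

definition w321 :: "nat \<Rightarrow> nat \<Rightarrow> nat" where
  "w321 n k = card {w :: nat list. length w = n \<and> set w \<subseteq> {1..k} \<and> avoids321 w}"

end

theory Submission
  imports Defs
begin


definition desc_bot :: "nat list \<Rightarrow> nat \<Rightarrow> bool" where
  "desc_bot p y \<longleftrightarrow> (\<exists>i j. i < j \<and> j < length p \<and> p ! i > p ! j \<and> p ! j = y)"

lemma avoids321_prefix:
  assumes A: "avoids321 (p @ u)" shows "avoids321 p"
  unfolding avoids321_def
proof (rule notI, elim exE conjE)
  fix i1 i2 i3 assume h: "i1 < i2" "i2 < i3" "i3 < length p" "p ! i2 < p ! i1" "p ! i3 < p ! i2"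
  then have e: "(p@u)!i1 = p!i1" "(p@u)!i2 = p!i2" "(p@u)!i3 = p!i3" by (auto simp: nth_append)
  show False using A unfolding avoids321_def
    apply (rule notE)
    apply (rule exI[of _ i1], rule exI[of _ i2], rule exI[of _ i3])
    using h e by auto
qed

lemma avoids321_snoc:
  "avoids321 (p @ [x]) \<longleftrightarrow> avoids321 p \<and> \<not> (\<exists>y. desc_bot p y \<and> x < y)"
proof
  assume A: "avoids321 (p @ [x])"
  have "avoids321 p" using A avoids321_prefix by blast
  moreover have "\<not> (\<exists>y. desc_bot p y \<and> x < y)"
  proof
    assume "\<exists>y. desc_bot p y \<and> x < y"
    then obtain i j where "i < j" "j < length p" "p ! i > p ! j" "x < p ! j"
      unfolding desc_bot_def by blast
    then have e: "(p@[x])!i = p!i" "(p@[x])!j = p!j" "(p@[x])!(length p) = x" by (auto simp: nth_append)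
    show False using A unfolding avoids321_def
      apply (rule notE)
      apply (rule exI[of _ i], rule exI[of _ j], rule exI[of _ "length p"])
      using \<open>i < j\<close> \<open>j < length p\<close> \<open>p ! i > p ! j\<close> \<open>x < p ! j\<close> e by auto
  qed
  ultimately show "avoids321 p \<and> \<not> (\<exists>y. desc_bot p y \<and> x < y)" by blast
next
  assume B: "avoids321 p \<and> \<not> (\<exists>y. desc_bot p y \<and> x < y)"
  show "avoids321 (p @ [x])"
    unfolding avoids321_def
  proof
    assume "\<exists>i1 i2 i3. i1 < i2 \<and> i2 < i3 \<and> i3 < length (p @ [x]) \<and> (p @ [x]) ! i2 < (p @ [x]) ! i1 \<and> (p @ [x]) ! i3 < (p @ [x]) ! i2"
    then obtain i1 i2 i3 where h: "i1 < i2" "i2 < i3" "i3 < length (p @ [x])"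
      "(p @ [x]) ! i2 < (p @ [x]) ! i1" "(p @ [x]) ! i3 < (p @ [x]) ! i2" by blast
    show False
    proof (cases "i3 < length p")
      case True
      then show False using h B unfolding avoids321_def by (auto simp: nth_append)
    next
      case False
      then have "i3 = length p" using h by simp
      then have "desc_bot p (p ! i2) \<and> x < p ! i2" using h unfolding desc_bot_def
        by (auto simp: nth_append)
      then show False using B by blast
    qed
  qed
qed

lemma desc_bot_snoc:
  "desc_bot (p @ [x]) y \<longleftrightarrow> desc_bot p y \<or> (y = x \<and> (\<exists>z\<in>set p. z > x))"
proof
  assume "desc_bot (p @ [x]) y"
  then obtain i j where h: "i < j" "j < length (p@[x])" "(p@[x]) ! i > (p@[x]) ! j" "(p@[x]) ! j = y"
    unfolding desc_bot_def by blast
  show "desc_bot p y \<or> (y = x \<and> (\<exists>z\<in>set p. z > x))"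
  proof (cases "j < length p")
    case True
    then show ?thesis using h unfolding desc_bot_def by (auto simp: nth_append)
  next
    case False
    then have "j = length p" using h by simp
    then show ?thesis using h by (auto simp: nth_append)
  qed
next
  assume "desc_bot p y \<or> (y = x \<and> (\<exists>z\<in>set p. z > x))"
  then show "desc_bot (p @ [x]) y"
  proof
    assume "desc_bot p y"
    then obtain i j where "i < j" "j < length p" "p ! i > p ! j" "p ! j = y"
      unfolding desc_bot_def by blast
    then show ?thesis unfolding desc_bot_def
      by (rule_tac x=i in exI, rule_tac x=j in exI) (auto simp: nth_append)
  next
    assume "y = x \<and> (\<exists>z\<in>set p. z > x)"
    then obtain i where "i < length p" "p ! i > x" "y = x" by (auto simp: in_set_conv_nth)
    then show ?thesis unfolding desc_bot_def
      by (rule_tac x=i in exI, rule_tac x="length p" in exI) (auto simp: nth_append)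
  qed
qed

fun ok :: "nat \<Rightarrow> nat \<Rightarrow> nat \<Rightarrow> nat list \<Rightarrow> bool" where
  "ok k b M [] = True"
| "ok k b M (x # u) = (b \<le> x \<and> x \<le> k \<and> ok k (if x < M then x else b) (max M x) u)"

definition INV :: "nat list \<Rightarrow> nat \<Rightarrow> nat \<Rightarrow> bool" where
  "INV p b M \<longleftrightarrow> 1 \<le> b \<and> (\<forall>y\<in>set p. y \<le> M) \<and> (M = 1 \<or> M \<in> set p)
     \<and> (\<forall>y. desc_bot p y \<longrightarrow> y \<le> b) \<and> (b = 1 \<or> desc_bot p b)"

lemma INV_step:
  assumes I: "INV p b M" and x: "b \<le> x" and p1: "\<forall>y\<in>set p. 1 \<le> y"
  shows "INV (p @ [x]) (if x < M then x else b) (max M x)"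
proof -
  have xM: "x < M \<longleftrightarrow> (\<exists>z\<in>set p. z > x)"
  proof
    assume "x < M"
    then have "M \<noteq> 1 \<or> x < 1" by auto
    then show "\<exists>z\<in>set p. z > x" using I x \<open>x < M\<close> unfolding INV_def by auto
  next
    assume "\<exists>z\<in>set p. z > x" then show "x < M" using I unfolding INV_def by force
  qed
  have M1: "1 \<le> M" using I p1 unfolding INV_def by auto
  show ?thesis
  proof (cases "x < M")
    case True
    then have e: "(\<exists>z\<in>set p. z > x)" using xM by blast
    show ?thesis unfolding INV_def desc_bot_snoc
    proof (intro conjI)
      show "1 \<le> (if x < M then x else b)" using True x I unfolding INV_def by auto
      show "\<forall>y\<in>set (p @ [x]). y \<le> max M x" using I unfolding INV_def by auto
      show "max M x = 1 \<or> max M x \<in> set (p @ [x])" using I True unfolding INV_def by auto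
      show "\<forall>y. desc_bot p y \<or> y = x \<and> (\<exists>z\<in>set p. x < z) \<longrightarrow> y \<le> (if x < M then x else b)"
        using I True x unfolding INV_def by force
      show "(if x < M then x else b) = 1 \<or> desc_bot p (if x < M then x else b) \<or>
          (if x < M then x else b) = x \<and> (\<exists>z\<in>set p. x < z)" using True e by auto
    qed
  next
    case False
    then have e: "\<not>(\<exists>z\<in>set p. z > x)" using xM by blast
    show ?thesis unfolding INV_def desc_bot_snoc
    proof (intro conjI)
      show "1 \<le> (if x < M then x else b)" using False x I unfolding INV_def by auto
      show "\<forall>y\<in>set (p @ [x]). y \<le> max M x" using I unfolding INV_def by auto
      show "max M x = 1 \<or> max M x \<in> set (p @ [x])" using I False unfolding INV_def by (auto simp: max_def)
      show "\<forall>y. desc_bot p y \<or> y = x \<and> (\<exists>z\<in>set p. x < z) \<longrightarrow> y \<le> (if x < M then x else b)"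
        using I False e unfolding INV_def by auto
      show "(if x < M then x else b) = 1 \<or> desc_bot p (if x < M then x else b) \<or>
          (if x < M then x else b) = x \<and> (\<exists>z\<in>set p. x < z)" using False I unfolding INV_def by auto
    qed
  qed
qed

lemma key:
  assumes "INV p b M" "set p \<subseteq> {1..k}" "avoids321 p"
  shows "ok k b M u \<longleftrightarrow> set u \<subseteq> {1..k} \<and> avoids321 (p @ u)"
  using assms
proof (induction u arbitrary: p b M)
  case Nil
  then show ?case by simp
next
  case (Cons x u)
  have b1: "1 \<le> b" using Cons.prems unfolding INV_def by auto
  show ?case
  proof (cases "1 \<le> x \<and> b \<le> x \<and> x \<le> k")
    case True
    have av: "avoids321 (p @ [x])"
    proof -
      have "\<not> (\<exists>y. desc_bot p y \<and> x < y)"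
        using Cons.prems True unfolding INV_def by force
      then show ?thesis using avoids321_snoc Cons.prems(3) by auto
    qed
    have p1: "\<forall>y\<in>set p. 1 \<le> y" using Cons.prems(2) by auto
    have I2: "INV (p @ [x]) (if x < M then x else b) (max M x)"
      using INV_step[OF Cons.prems(1) _ p1] True by auto
    have "ok k (if x < M then x else b) (max M x) u \<longleftrightarrow> set u \<subseteq> {1..k} \<and> avoids321 ((p @ [x]) @ u)"
      by (rule Cons.IH[OF I2]) (use Cons.prems True av in auto)
    then show ?thesis using True b1 by auto
  next
    case False
    show ?thesis
    proof (cases "1 \<le> x \<and> x \<le> k")
      case True
      then have "x < b" using False by auto
      then have "b \<noteq> 1" using True by auto
      then have "desc_bot p b" using Cons.prems unfolding INV_def by auto
      then have "\<not> avoids321 (p @ [x])" using avoids321_snoc \<open>x < b\<close> by blast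
      then show ?thesis using avoids321_prefix[of "p @ [x]" u] False True b1 by auto
    next
      case False
      then show ?thesis using b1 by auto
    qed
  qed
qed

lemma w321_ok: "k \<ge> 1 \<Longrightarrow> {w. length w = n \<and> set w \<subseteq> {1..k} \<and> avoids321 w} = {u. length u = n \<and> ok k 1 1 u}"
proof -
  have I: "INV [] 1 1" unfolding INV_def desc_bot_def by auto
  have "avoids321 []" unfolding avoids321_def by auto
  then show ?thesis using key[OF I, of k] by auto
qed


lemma ok_set: "ok k b M u \<Longrightarrow> set u \<subseteq> {0..k}"
  by (induction u arbitrary: b M) auto

lemma ok_finite: "finite {u. length u = n \<and> ok k b M u}"
  apply (rule rev_finite_subset[OF finite_lists_length_eq[of "{0..k}" n]])
   apply simp
proof (rule subsetI)
  fix u assume "u \<in> {u. length u = n \<and> ok k b M u}"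
  then show "u \<in> {xs. set xs \<subseteq> {0..k} \<and> length xs = n}" using ok_set[of k b M u] by auto
qed

definition cnt :: "nat \<Rightarrow> nat \<Rightarrow> nat \<Rightarrow> nat \<Rightarrow> nat" where
  "cnt k n b M = card {u. length u = n \<and> ok k b M u}"

lemma cnt_0: "cnt k 0 b M = 1"
proof -
  have "{u. length u = 0 \<and> ok k b M u} = {[]}" by auto
  then show ?thesis unfolding cnt_def by simp
qed

lemma cnt_Suc: "cnt k (Suc n) b M = (\<Sum>x\<in>{b..k}. cnt k n (if x < M then x else b) (max M x))"
proof -
  have eq: "{u. length u = Suc n \<and> ok k b M u} =
     (\<Union>x\<in>{b..k}. (#) x ` {u. length u = n \<and> ok k (if x < M then x else b) (max M x) u})"
  proof (rule set_eqI)
    fix w show "w \<in> {u. length u = Suc n \<and> ok k b M u} \<longleftrightarrow>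
       w \<in> (\<Union>x\<in>{b..k}. (#) x ` {u. length u = n \<and> ok k (if x < M then x else b) (max M x) u})"
      by (cases w) auto
  qed
  have "card {u. length u = Suc n \<and> ok k b M u} =
     (\<Sum>x\<in>{b..k}. card ((#) x ` {u. length u = n \<and> ok k (if x < M then x else b) (max M x) u}))"
    unfolding eq
    by (rule card_UN_disjoint) (auto intro: ok_finite)
  also have "\<dots> = (\<Sum>x\<in>{b..k}. cnt k n (if x < M then x else b) (max M x))"
    unfolding cnt_def
    by (rule sum.cong) (auto intro!: card_image)
  finally show ?thesis unfolding cnt_def .
qed

lemma cnt_Suc_split:
  assumes "b \<le> M" "M \<le> k"
  shows "cnt k (Suc n) b M = (\<Sum>x\<in>{b..<M}. cnt k n x M) + cnt k n b M + (\<Sum>x\<in>{M<..k}. cnt k n b x)"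
proof -
  define f where "f x = cnt k n (if x < M then x else b) (max M x)" for x
  have s1: "{b..k} = {b..<M} \<union> {M..k}" "{b..<M} \<inter> {M..k} = {}" using assms by auto
  have s2: "{M..k} = insert M {M<..k}" using assms by auto
  have "cnt k (Suc n) b M = sum f {b..k}" using cnt_Suc f_def by simp
  also have "\<dots> = sum f {b..<M} + sum f {M..k}" unfolding s1(1) by (rule sum.union_disjoint) (use s1 in auto)
  also have "sum f {M..k} = f M + sum f {M<..k}" unfolding s2 by (rule sum.insert) auto
  also have "sum f {b..<M} = (\<Sum>x\<in>{b..<M}. cnt k n x M)" by (rule sum.cong) (auto simp: f_def max_def)
  also have "sum f {M<..k} = (\<Sum>x\<in>{M<..k}. cnt k n b x)" by (rule sum.cong) (auto simp: f_def max_def)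
  also have "f M = cnt k n b M" by (simp add: f_def)
  finally show ?thesis by simp
qed



definition h :: "int \<Rightarrow> nat \<Rightarrow> int" where
  "h m v = (if m < 0 then 0 else int ((v + nat m - 1) choose nat m))"

lemma h_neg: "m < 0 \<Longrightarrow> h m v = 0" by (simp add: h_def)
lemma h_0: "h 0 v = 1" by (simp add: h_def)
lemma h_zero_pos: "m > 0 \<Longrightarrow> h m 0 = 0" by (simp add: h_def)

lemma h_pascal: "h m (Suc v) = h m v + h (m - 1) (Suc v)"
proof (cases "m < 0")
  case True then show ?thesis by (simp add: h_def)
next
  case False
  show ?thesis
  proof (cases "m = 0")
    case True then show ?thesis by (simp add: h_def)
  next
    case False
    with \<open>\<not> m < 0\<close> obtain m' where m: "m = int (Suc m')" by (metis not_le nat_0_le zero_less_imp_eq_int less_le not0_implies_Suc of_nat_0 order.refl nat_int)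
    have nm: "nat m = Suc m'" "\<not> m < 0" "nat (m - 1) = m'" "\<not> m - 1 < 0" using m by auto
    have "h m (Suc v) = int (Suc (v + m') choose Suc m')" unfolding h_def using nm by simp
    also have "\<dots> = int ((v + m') choose m') + int ((v + m') choose Suc m')" by simp
    also have "int ((v + m') choose Suc m') = h m v" unfolding h_def using nm by simp
    also have "int ((v + m') choose m') = h (m - 1) (Suc v)" unfolding h_def using nm by simp
    finally show ?thesis by simp
  qed
qed

lemma h_hockey:
  assumes "\<beta> \<le> \<alpha>" "-1 \<le> m"
  shows "(\<Sum>v\<in>{Suc \<beta>..\<alpha>}. h m v) = h (m + 1) \<alpha> - h (m + 1) \<beta>"
  using assms(1)
proof (induction \<alpha> rule: dec_induct)
  case base then show ?case by simp
next
  case (step a)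
  have "{Suc \<beta>..Suc a} = insert (Suc a) {Suc \<beta>..a}" using step by auto
  then have "(\<Sum>v\<in>{Suc \<beta>..Suc a}. h m v) = h m (Suc a) + (\<Sum>v\<in>{Suc \<beta>..a}. h m v)" by simp
  also have "\<dots> = h m (Suc a) + h (m + 1) a - h (m + 1) \<beta>" using step by simp
  also have "h (m + 1) (Suc a) = h (m + 1) a + h m (Suc a)" using h_pascal[of "m+1" a] by simp
  ultimately show ?case by simp
qed

lemma h_sum_low:
  assumes "1 \<le> \<beta>" "0 \<le> m"
  shows "(\<Sum>v\<in>{1..\<beta> - 1}. h m v) = h (m + 1) \<beta> - h m \<beta>"
proof -
  have "(\<Sum>v\<in>{Suc 0..\<beta> - 1}. h m v) = h (m + 1) (\<beta> - 1) - h (m + 1) 0"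
    by (rule h_hockey) (use assms in auto)
  also have "h (m + 1) 0 = 0" using assms by (simp add: h_zero_pos)
  also have "h (m + 1) (\<beta> - 1) = h (m + 1) \<beta> - h m \<beta>"
    using h_pascal[of "m+1" "\<beta> - 1"] assms by simp
  finally show ?thesis by simp
qed

definition E :: "nat \<Rightarrow> nat \<Rightarrow> nat \<Rightarrow> nat \<Rightarrow> int" where
  "E n \<alpha> \<beta> a = h (int a) \<alpha> * h (int n - int a) \<beta> - h (int a - 1) \<alpha> * h (int n - int a + 1) \<beta>"

definition D :: "nat \<Rightarrow> nat \<Rightarrow> nat \<Rightarrow> int" where
  "D n \<alpha> \<beta> = (\<Sum>a\<le>n. int (n choose a) * E n \<alpha> \<beta> a)"

lemma binom_split:
  fixes f :: "nat \<Rightarrow> int"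
  shows "(\<Sum>a\<le>Suc n. int (Suc n choose a) * f a) = (\<Sum>a\<le>n. int (n choose a) * (f a + f (Suc a)))"
proof -
  have "(\<Sum>a\<le>Suc n. int (Suc n choose a) * f a) = f 0 + (\<Sum>a\<le>n. int (Suc n choose Suc a) * f (Suc a))"
    by (subst sum.atMost_Suc_shift) simp
  also have "\<dots> = f 0 + (\<Sum>a\<le>n. int (n choose a) * f (Suc a)) + (\<Sum>a\<le>n. int (n choose Suc a) * f (Suc a))"
    by (simp add: sum.distrib algebra_simps)
  also have "(\<Sum>a\<le>n. int (n choose Suc a) * f (Suc a)) = (\<Sum>a<n. int (n choose Suc a) * f (Suc a))"
    by (simp add: lessThan_Suc_atMost[symmetric])
  also have "f 0 + (\<Sum>a<n. int (n choose Suc a) * f (Suc a)) = (\<Sum>a\<le>n. int (n choose a) * f a)"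
    by (subst sum.atMost_shift) simp
  ultimately show ?thesis by (simp add: sum.distrib algebra_simps)
qed

lemma reflect:
  "(\<Sum>a\<le>n. int (n choose a) * (h (int a) \<beta> * h (int n - int a + 1) \<beta>))
   = (\<Sum>a\<le>n. int (n choose a) * (h (int a + 1) \<beta> * h (int n - int a) \<beta>))"
proof -
  have "(\<Sum>a\<in>{0..n}. int (n choose a) * (h (int a + 1) \<beta> * h (int n - int a) \<beta>))
      = (\<Sum>a\<in>{0..n}. int (n choose (n + 0 - a)) * (h (int (n + 0 - a) + 1) \<beta> * h (int n - int (n + 0 - a)) \<beta>))"
    by (rule sum.atLeastAtMost_rev)
  also have "\<dots> = (\<Sum>a\<in>{0..n}. int (n choose a) * (h (int a) \<beta> * h (int n - int a + 1) \<beta>))"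
    by (rule sum.cong) (auto simp: binomial_symmetric[symmetric] of_nat_diff algebra_simps)
  finally show ?thesis by (simp add: atLeast0AtMost)
qed


lemma D_rec:
  assumes b1: "1 \<le> \<beta>" and ba: "\<beta> \<le> \<alpha>"
  shows "D (Suc n) \<alpha> \<beta> = D n \<alpha> \<beta> + (\<Sum>a'\<in>{Suc \<beta>..\<alpha>}. D n a' \<beta>) + (\<Sum>b'\<in>{1..\<beta> - 1}. D n \<alpha> b')"
proof -
  define C where "C a = int (n choose a)" for a
  define X1 where "X1 a = (h (int a + 1) \<alpha> - h (int a + 1) \<beta>) * h (int n - int a) \<beta>
      - (h (int a) \<alpha> - h (int a) \<beta>) * h (int n - int a + 1) \<beta>" for a
  define X2 where "X2 a = h (int a) \<alpha> * (h (int n - int a + 1) \<beta> - h (int n - int a) \<beta>)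
      - h (int a - 1) \<alpha> * (h (int n - int a + 1 + 1) \<beta> - h (int n - int a + 1) \<beta>)" for a
  define Y where "Y a = h (int a) \<beta> * h (int n - int a + 1) \<beta> - h (int a + 1) \<beta> * h (int n - int a) \<beta>" for a
  have S1: "(\<Sum>a'\<in>{Suc \<beta>..\<alpha>}. D n a' \<beta>) = (\<Sum>a\<le>n. C a * X1 a)"
  proof -
    have "(\<Sum>a'\<in>{Suc \<beta>..\<alpha>}. D n a' \<beta>) = (\<Sum>a\<le>n. C a * (\<Sum>a'\<in>{Suc \<beta>..\<alpha>}. E n a' \<beta> a))"
      unfolding D_def C_def sum_distrib_left by (rule sum.swap)
    also have "\<dots> = (\<Sum>a\<le>n. C a * X1 a)"
    proof (rule sum.cong[OF refl])
      fix a assume "a \<in> {..n}"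
      have "(\<Sum>a'\<in>{Suc \<beta>..\<alpha>}. E n a' \<beta> a) = X1 a"
        unfolding E_def X1_def sum_subtractf sum_distrib_right[symmetric]
        using h_hockey[OF ba, of "int a"] h_hockey[OF ba, of "int a - 1"] by simp
      then show "C a * (\<Sum>a'\<in>{Suc \<beta>..\<alpha>}. E n a' \<beta> a) = C a * X1 a" by simp
    qed
    finally show ?thesis .
  qed
  have S2: "(\<Sum>b'\<in>{1..\<beta> - 1}. D n \<alpha> b') = (\<Sum>a\<le>n. C a * X2 a)"
  proof -
    have "(\<Sum>b'\<in>{1..\<beta> - 1}. D n \<alpha> b') = (\<Sum>a\<le>n. C a * (\<Sum>b'\<in>{1..\<beta> - 1}. E n \<alpha> b' a))"
      unfolding D_def C_def sum_distrib_left by (rule sum.swap)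
    also have "\<dots> = (\<Sum>a\<le>n. C a * X2 a)"
    proof (rule sum.cong[OF refl])
      fix a assume "a \<in> {..n}"
      then have "0 \<le> int n - int a" by simp
      then have "(\<Sum>b'\<in>{1..\<beta> - 1}. E n \<alpha> b' a) = X2 a"
        unfolding E_def X2_def sum_subtractf sum_distrib_left[symmetric]
        using h_sum_low[OF b1, of "int n - int a"] h_sum_low[OF b1, of "int n - int a + 1"] by simp
      then show "C a * (\<Sum>b'\<in>{1..\<beta> - 1}. E n \<alpha> b' a) = C a * X2 a" by simp
    qed
    finally show ?thesis .
  qed
  have L: "D (Suc n) \<alpha> \<beta> = (\<Sum>a\<le>n. C a * (E (Suc n) \<alpha> \<beta> a + E (Suc n) \<alpha> \<beta> (Suc a)))"
    unfolding D_def C_def by (rule binom_split)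
  have YZ: "(\<Sum>a\<le>n. C a * Y a) = 0"
    using reflect[of n \<beta>] unfolding C_def Y_def by (simp add: right_diff_distrib sum_subtractf)
  have P: "E n \<alpha> \<beta> a + X1 a + X2 a = E (Suc n) \<alpha> \<beta> a + E (Suc n) \<alpha> \<beta> (Suc a) + Y a" for a
    unfolding E_def X1_def X2_def Y_def by (simp add: algebra_simps)
  have "D n \<alpha> \<beta> + (\<Sum>a'\<in>{Suc \<beta>..\<alpha>}. D n a' \<beta>) + (\<Sum>b'\<in>{1..\<beta> - 1}. D n \<alpha> b')
     = D n \<alpha> \<beta> + (\<Sum>a\<le>n. C a * X1 a) + (\<Sum>a\<le>n. C a * X2 a)"
    using S1 S2 by simp
  also have "\<dots> = (\<Sum>a\<le>n. C a * (E n \<alpha> \<beta> a + X1 a + X2 a))"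
    unfolding D_def C_def by (simp add: sum.distrib algebra_simps)
  also have "\<dots> = (\<Sum>a\<le>n. C a * (E (Suc n) \<alpha> \<beta> a + E (Suc n) \<alpha> \<beta> (Suc a))) + (\<Sum>a\<le>n. C a * Y a)"
    unfolding P by (simp add: sum.distrib algebra_simps)
  finally show ?thesis using L YZ by simp
qed



definition g :: "nat \<Rightarrow> nat \<Rightarrow> int" where
  "g n j = int (n choose j) - (if j = 0 then 0 else int (n choose (j - 1)))"

lemma tel_g: "(\<Sum>j\<le>m. g n j) = int (n choose m)"
  by (induction m) (auto simp: g_def)

lemma tel_E:
  assumes "2 * j \<le> n"
  shows "(\<Sum>a\<in>{j..n - j}. E n \<alpha> \<alpha> a) = E n \<alpha> \<alpha> j"
proof -
  define G where "G i = h (int i - 1) \<alpha> * h (int n - int i + 1) \<alpha>" for i :: nat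
  have "E n \<alpha> \<alpha> a = G (Suc a) - G a" for a
    unfolding E_def G_def by (simp add: algebra_simps)
  then have "(\<Sum>a\<in>{j..n - j}. E n \<alpha> \<alpha> a) = (\<Sum>a\<in>{j..n - j}. G (Suc a) - G a)" by simp
  also have "\<dots> = G (Suc (n - j)) - G j" by (rule sum_Suc_diff) (use assms in auto)
  also have "\<dots> = E n \<alpha> \<alpha> j" unfolding G_def E_def using assms by (simp add: of_nat_diff algebra_simps)
  finally show ?thesis .
qed

lemma choose_as_g:
  assumes "a \<le> n"
  shows "int (n choose a) = (\<Sum>j\<le>n div 2. if j \<le> a \<and> a \<le> n - j then g n j else 0)"
proof -
  have "int (n choose a) = int (n choose (min a (n - a)))"
    using assms binomial_symmetric[OF assms] by (simp add: min_def)
  also have "\<dots> = (\<Sum>j\<le>min a (n - a). g n j)" by (rule tel_g[symmetric])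
  also have "{..min a (n - a)} = {..n div 2} \<inter> {j. j \<le> a \<and> a \<le> n - j}" using assms by auto
  also have "sum (g n) ({..n div 2} \<inter> {j. j \<le> a \<and> a \<le> n - j}) = (\<Sum>j\<le>n div 2. if j \<le> a \<and> a \<le> n - j then g n j else 0)"
    by (subst sum.inter_restrict) auto
  finally show ?thesis .
qed

lemma D_half: "D n \<alpha> \<alpha> = (\<Sum>j\<le>n div 2. g n j * E n \<alpha> \<alpha> j)"
proof -
  have "D n \<alpha> \<alpha> = (\<Sum>a\<le>n. (\<Sum>j\<le>n div 2. if j \<le> a \<and> a \<le> n - j then g n j else 0) * E n \<alpha> \<alpha> a)"
    unfolding D_def by (rule sum.cong) (auto simp: choose_as_g)
  also have "\<dots> = (\<Sum>a\<le>n. \<Sum>j\<le>n div 2. (if j \<le> a \<and> a \<le> n - j then g n j * E n \<alpha> \<alpha> a else 0))"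
    by (simp add: sum_distrib_right if_distrib[where f="\<lambda>x. x * E n \<alpha> \<alpha> _"] cong: if_cong)
  also have "\<dots> = (\<Sum>j\<le>n div 2. \<Sum>a\<le>n. (if j \<le> a \<and> a \<le> n - j then g n j * E n \<alpha> \<alpha> a else 0))"
    by (rule sum.swap)
  also have "\<dots> = (\<Sum>j\<le>n div 2. g n j * (\<Sum>a\<in>{j..n - j}. E n \<alpha> \<alpha> a))"
  proof (rule sum.cong[OF refl])
    fix j assume j: "j \<in> {..n div 2}"
    have "{..n} \<inter> {a. j \<le> a \<and> a \<le> n - j} = {j..n - j}" by auto
    then have "(\<Sum>a\<le>n. (if j \<le> a \<and> a \<le> n - j then g n j * E n \<alpha> \<alpha> a else 0))
        = (\<Sum>a\<in>{j..n - j}. g n j * E n \<alpha> \<alpha> a)"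
      using sum.inter_restrict[of "{..n}" "\<lambda>a. g n j * E n \<alpha> \<alpha> a" "{a. j \<le> a \<and> a \<le> n - j}"] by simp
    then show "(\<Sum>a\<le>n. (if j \<le> a \<and> a \<le> n - j then g n j * E n \<alpha> \<alpha> a else 0))
        = g n j * (\<Sum>a\<in>{j..n - j}. E n \<alpha> \<alpha> a)" by (simp add: sum_distrib_left)
  qed
  also have "\<dots> = (\<Sum>j\<le>n div 2. g n j * E n \<alpha> \<alpha> j)"
    by (rule sum.cong[OF refl]) (auto simp: tel_E)
  finally show ?thesis .
qed

lemma alg0:
  fixes F fi fm fr A B k a b c Q :: real
  assumes "fi \<noteq> 0" "fm \<noteq> 0" "fr \<noteq> 0" "a \<noteq> 0" "b \<noteq> 0" "c \<noteq> 0" "b = c + a" "Q = b * fm / (c * fr)"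
  shows "(F / (a * fi * fm) - F / (fi * (b * fm))) *
         (A * (k + (a - 1)) / (a * fi) * (B / fm) - A / fi * (B * (k + (b - 1)) / (b * fm)))
       = F * B * ((k - 1) * A) / (a * fi * fr * Q) ^ 2"
proof -
  have ba: "b - a = c" using assms(7) by simp
  have e1: "(F / (a * fi * fm) - F / (fi * (b * fm))) = F * (b - a) / (a * b * fi * fm)"
    using assms(1-5) by (simp add: field_simps)
  have e2: "(A * (k + (a - 1)) / (a * fi) * (B / fm) - A / fi * (B * (k + (b - 1)) / (b * fm)))
     = A * B * ((k + (a - 1)) * b - (k + (b - 1)) * a) / (a * b * fi * fm)"
    using assms(1-5) by (simp add: field_simps)
  have e3: "(k + (a - 1)) * b - (k + (b - 1)) * a = (k - 1) * (b - a)" by (simp add: algebra_simps)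
  have e4: "a * fi * fr * Q = a * fi * b * fm / c" using assms(1-6,8) by (simp add: field_simps)
  have "F * c / (a * b * fi * fm) * (A * B * ((k - 1) * c) / (a * b * fi * fm)) = F * B * ((k - 1) * A) / (a * fi * b * fm / c) ^ 2"
    using assms(1-6) by (simp add: field_simps power2_eq_square)
  then show ?thesis unfolding e1 e2 e3 e4 ba .
qed


lemma ff_poch: "falling_fact x m = pochhammer (x - real m + 1) m"
proof (induction m)
  case 0 then show ?case by (simp add: falling_fact_def)
next
  case (Suc m)
  have "falling_fact x (Suc m) = falling_fact x m * (x - real m)"
    by (simp add: falling_fact_def)
  also have "\<dots> = (x - real m) * pochhammer (x - real m + 1) m" using Suc by simp
  also have "\<dots> = pochhammer (x - real (Suc m) + 1) (Suc m)"
    by (simp add: pochhammer_rec)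
  finally show ?case .
qed

lemma h_real: "1 \<le> k \<Longrightarrow> real_of_int (h (int m) k) = pochhammer (real k) m / fact m"
proof -
  assume k: "1 \<le> k"
  have "real_of_int (h (int m) k) = real ((k + m - 1) choose m)" by (simp add: h_def)
  also have "\<dots> = real (k + m - 1) gchoose m" by (rule binomial_gbinomial)
  also have "\<dots> = pochhammer (real (k + m - 1) - real m + 1) m / fact m" by (rule gbinomial_pochhammer')
  also have "real (k + m - 1) - real m + 1 = real k" using k by (simp add: of_nat_diff)
  finally show ?thesis .
qed

lemma term_eq:
  assumes k: "1 \<le> k" and j: "2 * j \<le> n"
  shows "real_of_int (g n j * E n k k j) = fact n * falling_fact (real k + real n - real j - 1) (n - j)
              * falling_fact (real k + real j - 2) j
       / (fact j * fact (n - 2 * j) * falling_fact (real n - real j + 1) j) ^ 2"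
proof -
  have ff1: "falling_fact (real k + real n - real j - 1) (n - j) = pochhammer (real k) (n - j)"
    using j by (simp add: ff_poch of_nat_diff)
  have ff2: "falling_fact (real k + real j - 2) j = pochhammer (real k - 1) j"
    by (simp add: ff_poch)
  have ff3: "falling_fact (real n - real j + 1) j = pochhammer (real (n - 2 * j) + 2) j"
    using j by (simp add: ff_poch of_nat_diff add.commute)
  show ?thesis
  proof (cases j)
    case 0
    have "E n k k 0 = h (int n) k" by (simp add: E_def h_neg h_0)
    then show ?thesis using 0 ff1 k by (simp add: g_def h_real falling_fact_def power2_eq_square)
  next
    case (Suc i)
    define m where "m = n - j"
    define r where "r = n - 2 * j"
    have mr: "m = r + i + 1" "n = r + 2 * i + 2" using j Suc unfolding m_def r_def by auto
    define F where "F = (fact n :: real)"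
    define fi where "fi = (fact i :: real)"
    define fm where "fm = (fact m :: real)"
    define fr where "fr = (fact r :: real)"
    define A where "A = pochhammer (real k) i"
    define B where "B = pochhammer (real k) m"
    define Q where "Q = pochhammer (real r + 2) j"
    have Q: "Q = real (m + 1) * fm / (real (r + 1) * fr)"
    proof -
      have "(fact (Suc r + j) :: real) = pochhammer 1 (Suc r + j)" by (rule pochhammer_fact)
      also have "\<dots> = pochhammer 1 (Suc r) * pochhammer (1 + real (Suc r)) j" by (rule pochhammer_product')
      also have "\<dots> = fact (Suc r) * Q" unfolding Q_def by (simp add: pochhammer_fact add_ac)
      finally have "(fact (Suc m) :: real) = fact (Suc r) * Q" using mr Suc by (simp add: add_ac)
      then have eq: "real (m + 1) * fm = real (r + 1) * fr * Q" unfolding fm_def fr_def by simp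
      have nz: "real (r + 1) * fr \<noteq> 0" unfolding fr_def by simp
      show ?thesis by (rule eq_divide_imp[OF nz]) (use eq in \<open>simp only: mult_ac\<close>)
    qed
    have gE: "real_of_int (g n j) = F / (real (i + 1) * fi * fm) - F / (fi * (real (m + 1) * fm))"
    proof -
      have "real_of_int (g n j) = real (n choose j) - real (n choose i)" using Suc by (simp add: g_def)
      also have "real (n choose j) = F / (fact j * fact m)" unfolding F_def m_def
        using j by (simp add: binomial_fact)
      also have "real (n choose i) = F / (fact i * fact (Suc m))" unfolding F_def
        using j Suc mr by (subst binomial_fact) (auto simp: m_def Suc_diff_le)
      finally show ?thesis using Suc by (simp add: fi_def fm_def algebra_simps)
    qed
    have EE: "real_of_int (E n k k j) = A * (real k + (real (i + 1) - 1)) / (real (i + 1) * fi) * (B / fm)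
          - A / fi * (B * (real k + (real (m + 1) - 1)) / (real (m + 1) * fm))"
    proof -
      have a1: "int n - int j = int m" "int j - 1 = int i" "int n - int j + 1 = int (Suc m)"
        using j Suc unfolding m_def by auto
      have "real_of_int (E n k k j) = real_of_int (h (int j) k) * real_of_int (h (int m) k)
          - real_of_int (h (int i) k) * real_of_int (h (int (Suc m)) k)"
        unfolding E_def a1 by (simp add: add.commute)
      also have "\<dots> = pochhammer (real k) j / fact j * (B / fm) - A / fi * (pochhammer (real k) (Suc m) / fact (Suc m))"
        unfolding h_real[OF k] A_def B_def fi_def fm_def by (rule refl)
      also have "pochhammer (real k) j = A * (real k + real i)" unfolding A_def Suc by (simp add: pochhammer_Suc)
      also have "pochhammer (real k) (Suc m) = B * (real k + real m)" unfolding B_def by (simp add: pochhammer_Suc)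
      also have "(fact j :: real) = real (i + 1) * fi" unfolding fi_def Suc by simp
      also have "(fact (Suc m) :: real) = real (m + 1) * fm" unfolding fm_def by simp
      finally show ?thesis by simp
    qed
    have R: "fact n * falling_fact (real k + real n - real j - 1) (n - j) * falling_fact (real k + real j - 2) j
       / (fact j * fact (n - 2 * j) * falling_fact (real n - real j + 1) j) ^ 2
       = F * B * ((real k - 1) * A) / (real (i + 1) * fi * fr * Q) ^ 2"
    proof -
      have "pochhammer (real k - 1) j = (real k - 1) * A" unfolding A_def Suc by (simp add: pochhammer_rec)
      moreover have "(fact j :: real) = real (i + 1) * fi" unfolding fi_def Suc by simp
      ultimately show ?thesis unfolding ff1 ff2 ff3 F_def B_def fr_def Q_def m_def r_def
        by (simp add: mult_ac)
    qed
    have "real_of_int (g n j * E n k k j) = F * B * ((real k - 1) * A) / (real (i + 1) * fi * fr * Q) ^ 2"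
      unfolding of_int_mult gE EE
      by (rule alg0) (auto simp: fi_def fm_def fr_def Q mr)
    then show ?thesis using R by simp
  qed
qed


lemma cnt_D:
  assumes "1 \<le> b" "b \<le> M" "M \<le> k"
  shows "int (cnt k n b M) = D n (k + 1 - b) (k + 1 - M)"
  using assms
proof (induction n arbitrary: b M)
  case 0
  then show ?case by (simp add: cnt_0 D_def E_def h_0 h_neg)
next
  case (Suc n)
  define \<alpha> where "\<alpha> = k + 1 - b"
  define \<beta> where "\<beta> = k + 1 - M"
  have b1: "1 \<le> \<beta>" and ba: "\<beta> \<le> \<alpha>" using Suc.prems unfolding \<alpha>_def \<beta>_def by auto
  have "int (cnt k (Suc n) b M) = (\<Sum>x\<in>{b..<M}. int (cnt k n x M)) + int (cnt k n b M) + (\<Sum>x\<in>{M<..k}. int (cnt k n b x))"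
    using cnt_Suc_split[OF Suc.prems(2,3)] by simp
  also have "\<dots> = (\<Sum>x\<in>{b..<M}. D n (k + 1 - x) \<beta>) + D n \<alpha> \<beta> + (\<Sum>x\<in>{M<..k}. D n \<alpha> (k + 1 - x))"
  proof -
    have "(\<Sum>x\<in>{b..<M}. int (cnt k n x M)) = (\<Sum>x\<in>{b..<M}. D n (k + 1 - x) \<beta>)"
      by (rule sum.cong[OF refl]) (use Suc in \<open>auto simp: \<beta>_def\<close>)
    moreover have "(\<Sum>x\<in>{M<..k}. int (cnt k n b x)) = (\<Sum>x\<in>{M<..k}. D n \<alpha> (k + 1 - x))"
      by (rule sum.cong[OF refl]) (use Suc in \<open>auto simp: \<alpha>_def\<close>)
    moreover have "int (cnt k n b M) = D n \<alpha> \<beta>" using Suc unfolding \<alpha>_def \<beta>_def by auto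
    ultimately show ?thesis by simp
  qed
  also have "(\<Sum>x\<in>{b..<M}. D n (k + 1 - x) \<beta>) = (\<Sum>a'\<in>{Suc \<beta>..\<alpha>}. D n a' \<beta>)"
    by (rule sum.reindex_bij_witness[where i="\<lambda>x. k + 1 - x" and j="\<lambda>x. k + 1 - x"])
       (use Suc.prems in \<open>auto simp: \<alpha>_def \<beta>_def\<close>)
  also have "(\<Sum>x\<in>{M<..k}. D n \<alpha> (k + 1 - x)) = (\<Sum>b'\<in>{1..\<beta> - 1}. D n \<alpha> b')"
    by (rule sum.reindex_bij_witness[where i="\<lambda>x. k + 1 - x" and j="\<lambda>x. k + 1 - x"])
       (use Suc.prems in \<open>auto simp: \<alpha>_def \<beta>_def\<close>)
  finally show ?case using D_rec[OF b1 ba] unfolding \<alpha>_def \<beta>_def by simp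
qed

theorem corollary3p2:
  fixes n k :: nat
  assumes "n \<ge> 1" and "k \<ge> 1"
  shows "real (w321 n k) =
    (\<Sum>a = 0..n div 2.
       fact n * falling_fact (real k + real n - real a - 1) (n - a)
              * falling_fact (real k + real a - 2) a
       / (fact a * fact (n - 2 * a) * falling_fact (real n - real a + 1) a) ^ 2)"
proof -
  have "w321 n k = cnt k n 1 1" unfolding w321_def cnt_def using w321_ok[OF assms(2)] by simp
  then have "real (w321 n k) = real_of_int (int (cnt k n 1 1))" by simp
  also have "int (cnt k n 1 1) = D n k k" using cnt_D[of 1 1 k n] assms by simp
  also have "D n k k = (\<Sum>j\<le>n div 2. g n j * E n k k j)" by (rule D_half)
  also have "real_of_int (\<Sum>j\<le>n div 2. g n j * E n k k j) = (\<Sum>j\<le>n div 2. real_of_int (g n j * E n k k j))"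
    by simp
  also have "\<dots> = (\<Sum>a\<le>n div 2.
       fact n * falling_fact (real k + real n - real a - 1) (n - a)
              * falling_fact (real k + real a - 2) a
       / (fact a * fact (n - 2 * a) * falling_fact (real n - real a + 1) a) ^ 2)"
  proof (rule sum.cong[OF refl])
    fix j assume "j \<in> {..n div 2}"
    then have "2 * j \<le> n" by auto
    then show "real_of_int (g n j * E n k k j) =
       fact n * falling_fact (real k + real n - real j - 1) (n - j)
              * falling_fact (real k + real j - 2) j
       / (fact j * fact (n - 2 * j) * falling_fact (real n - real j + 1) j) ^ 2"
      by (rule term_eq[OF assms(2)])
  qed
  finally show ?thesis by (simp add: atLeast0AtMost)
qed

end
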